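(* Let $A\subset\mathbb{N}\setminus\{1\}$. If $L(A)$ is densely lineable in $\ell^\infty$, then $A\cap(A-1)$ is infinite, where $A-1=\{a-1:a\in A\}$. In particular, $L(2\mathbb{N}+1)$ and $L(2\mathbb{N})$ are not densely lineable.
   Context: $\ell^\infty$ is the Banach space of bounded real sequences with the sup norm. For $x\in\ell^\infty$, $L_x$ denotes the set of accumulation points (subsequential limits) of $x$. For a set $A$ of cardinalities, $L(A)=\{x\in\ell^\infty: |L_x|\in A\}$. A subset $Y$ of $\ell^\infty$ is densely lineable if $Y\cup\{0\}$ contains an infinite-dimensional linear subspace that is dense in $\ell^\infty$ (norm topology). *)

theory Defs
  imports "HOL-Analysis.Analysis"
begin

text \<open>The Banach space of bounded real sequences with the sup norm is modelled as the
  type of bounded continuous functions from nat (discrete topology) to real.\<close>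
type_synonym linf = "nat \<Rightarrow>\<^sub>C real"

definition acc_points :: "linf \<Rightarrow> real set" where
  "acc_points x = {t. \<exists>r::nat \<Rightarrow> nat. strict_mono r \<and> ((\<lambda>n. x (r n)) \<longlonglongrightarrow> t)}"

definition Lset :: "nat set \<Rightarrow> linf set" where
  "Lset A = {x. finite (acc_points x) \<and> card (acc_points x) \<in> A}"

definition densely_lineable :: "linf set \<Rightarrow> bool" where
  "densely_lineable Y \<longleftrightarrow>
     (\<exists>V. subspace V \<and> (\<exists>B. B \<subseteq> V \<and> independent B \<and> infinite B)
          \<and> V \<subseteq> Y \<union> {0} \<and> closure V = UNIV)"

end

theory Submission
  imports Defs
begin

lemma approx_in_V:
  fixes V :: "linf set" and f :: "nat \<Rightarrow> real"
  assumes "closure V = UNIV" "e > 0" "\<And>n. \<bar>f n\<bar> \<le> B"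
  shows "\<exists>v\<in>V. \<forall>n. \<bar>apply_bcontfun v n - f n\<bar> < e"
proof -
  have fb: "f \<in> bcontfun"
    by (rule bcontfun_normI[where b=B]) (auto simp: assms(3))
  have "Bcontfun f \<in> closure V" using assms(1) by simp
  then obtain v where v: "v \<in> V" "dist v (Bcontfun f) < e"
    using closure_approachable assms(2) by blast
  have "\<forall>n. \<bar>apply_bcontfun v n - f n\<bar> < e"
  proof
    fix n
    have "dist (apply_bcontfun v n) (apply_bcontfun (Bcontfun f) n) < e"
      by (rule dist_fun_lt_imp_dist_val_lt[OF v(2)])
    then show "\<bar>apply_bcontfun v n - f n\<bar> < e"
      using Bcontfun_inverse[OF fb] by (simp add: dist_real_def)
  qed
  with v show ?thesis by blast
qed

lemma bw:
  fixes f :: "nat \<Rightarrow> 'a::{heine_borel,real_normed_vector}"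
  assumes "\<And>n. norm (f n) \<le> B"
  shows "\<exists>s l. strict_mono s \<and> (\<lambda>n. f (s n)) \<longlonglongrightarrow> l"
proof -
  have "bounded (range f)" unfolding bounded_iff using assms by blast
  from bounded_imp_convergent_subsequence[OF this] show ?thesis
    by (auto simp: o_def)
qed

lemma acc_zero: "acc_points 0 = {0}"
proof -
  have "strict_mono (id::nat\<Rightarrow>nat)" by (simp add: strict_mono_def)
  then show ?thesis
    unfolding acc_points_def
    by (auto simp: LIMSEQ_const_iff)
qed

lemma acc_bound:
  assumes "t \<in> acc_points x" shows "\<bar>t\<bar> \<le> norm x"
proof -
  from assms obtain r where r: "(\<lambda>n. apply_bcontfun x (r n)) \<longlonglongrightarrow> t"
    unfolding acc_points_def by blast
  have "(\<lambda>n. \<bar>apply_bcontfun x (r n)\<bar>) \<longlonglongrightarrow> \<bar>t\<bar>" by (rule tendsto_rabs[OF r])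
  moreover have "\<forall>n. \<bar>apply_bcontfun x (r n)\<bar> \<le> norm x"
    using norm_bounded[of x] by (metis real_norm_def)
  ultimately show ?thesis by (meson LIMSEQ_le_const2)
qed

definition jacc :: "linf \<Rightarrow> linf \<Rightarrow> (real \<times> real) set" where
  "jacc x z = {p. \<exists>r::nat\<Rightarrow>nat. strict_mono r \<and>
      ((\<lambda>n. (apply_bcontfun x (r n), apply_bcontfun z (r n))) \<longlonglongrightarrow> p)}"

lemma pair_bound:
  "norm (apply_bcontfun x n, apply_bcontfun z n) \<le> norm x + norm z"
proof -
  have "norm (apply_bcontfun x n, apply_bcontfun z n) \<le> norm (apply_bcontfun x n) + norm (apply_bcontfun z n)"
    by (rule norm_Pair_le)
  also have "\<dots> \<le> norm x + norm z" using norm_bounded[of x] norm_bounded[of z] by (intro add_mono) auto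
  finally show ?thesis .
qed

lemma acc_lin:
  "acc_points (x + c *\<^sub>R z) = (\<lambda>(a,b). a + c*b) ` jacc x z"
proof
  show "(\<lambda>(a,b). a + c*b) ` jacc x z \<subseteq> acc_points (x + c *\<^sub>R z)"
  proof clarify
    fix a b assume "(a,b) \<in> jacc x z"
    then obtain r where r: "strict_mono r"
      "(\<lambda>n. (apply_bcontfun x (r n), apply_bcontfun z (r n))) \<longlonglongrightarrow> (a,b)"
      unfolding jacc_def by blast
    have "(\<lambda>n. apply_bcontfun x (r n)) \<longlonglongrightarrow> a" using tendsto_fst[OF r(2)] by simp
    moreover have "(\<lambda>n. apply_bcontfun z (r n)) \<longlonglongrightarrow> b" using tendsto_snd[OF r(2)] by simp
    ultimately have "(\<lambda>n. apply_bcontfun x (r n) + c * apply_bcontfun z (r n)) \<longlonglongrightarrow> a + c*b"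
      by (intro tendsto_intros)
    then show "a + c*b \<in> acc_points (x + c *\<^sub>R z)"
      unfolding acc_points_def using r(1) by auto
  qed
next
  show "acc_points (x + c *\<^sub>R z) \<subseteq> (\<lambda>(a,b). a + c*b) ` jacc x z"
  proof
    fix t assume "t \<in> acc_points (x + c *\<^sub>R z)"
    then obtain r where r: "strict_mono r"
      "(\<lambda>n. apply_bcontfun x (r n) + c * apply_bcontfun z (r n)) \<longlonglongrightarrow> t"
      unfolding acc_points_def by auto
    obtain s p where s: "strict_mono s"
      "(\<lambda>n. (apply_bcontfun x (r (s n)), apply_bcontfun z (r (s n)))) \<longlonglongrightarrow> p"
      using bw[of "\<lambda>n. (apply_bcontfun x (r n), apply_bcontfun z (r n))", OF pair_bound] by blast
    obtain a b where p: "p = (a,b)" by (cases p)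
    have rs: "strict_mono (r \<circ> s)" using r(1) s(1) by (rule strict_mono_o)
    have pin: "(a,b) \<in> jacc x z" unfolding jacc_def using rs s(2) p by (auto simp: o_def)
    have "(\<lambda>n. apply_bcontfun x (r (s n))) \<longlonglongrightarrow> a" using tendsto_fst[OF s(2)] p by simp
    moreover have "(\<lambda>n. apply_bcontfun z (r (s n))) \<longlonglongrightarrow> b" using tendsto_snd[OF s(2)] p by simp
    ultimately have l1: "(\<lambda>n. apply_bcontfun x (r (s n)) + c * apply_bcontfun z (r (s n))) \<longlonglongrightarrow> a + c*b"
      by (intro tendsto_intros)
    have l2: "(\<lambda>n. apply_bcontfun x (r (s n)) + c * apply_bcontfun z (r (s n))) \<longlonglongrightarrow> t"
      using LIMSEQ_subseq_LIMSEQ[OF r(2) s(1)] by (simp add: o_def)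
    have "t = (\<lambda>(a,b). a + c*b) (a,b)" using LIMSEQ_unique[OF l2 l1] by simp
    then show "t \<in> (\<lambda>(a,b). a + c*b) ` jacc x z" using pin by (rule image_eqI)
  qed
qed

lemma jacc_sub: "jacc x z \<subseteq> acc_points x \<times> acc_points z"
proof
  fix p assume "p \<in> jacc x z"
  then obtain r where r: "strict_mono r"
    "(\<lambda>n. (apply_bcontfun x (r n), apply_bcontfun z (r n))) \<longlonglongrightarrow> p"
    unfolding jacc_def by blast
  have "fst p \<in> acc_points x" using tendsto_fst[OF r(2)] r(1) unfolding acc_points_def by auto
  moreover have "snd p \<in> acc_points z" using tendsto_snd[OF r(2)] r(1) unfolding acc_points_def by auto
  ultimately show "p \<in> acc_points x \<times> acc_points z" by (simp add: mem_Times_iff)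
qed

lemma jacc_exists:
  assumes "a \<in> acc_points x" shows "\<exists>b. (a,b) \<in> jacc x z"
proof -
  from assms obtain r where r: "strict_mono r" "(\<lambda>n. apply_bcontfun x (r n)) \<longlonglongrightarrow> a"
    unfolding acc_points_def by blast
  obtain s b where s: "strict_mono s" "(\<lambda>n. apply_bcontfun z (r (s n))) \<longlonglongrightarrow> b"
    using bw[of "\<lambda>n. apply_bcontfun z (r n)" "norm z"] norm_bounded[of z] by blast
  have "(\<lambda>n. apply_bcontfun x (r (s n))) \<longlonglongrightarrow> a"
    using LIMSEQ_subseq_LIMSEQ[OF r(2) s(1)] by (simp add: o_def)
  then have "(\<lambda>n. (apply_bcontfun x (r (s n)), apply_bcontfun z (r (s n)))) \<longlonglongrightarrow> (a,b)"
    using s(2) by (intro tendsto_Pair)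
  moreover have "strict_mono (r \<circ> s)" using r(1) s(1) by (rule strict_mono_o)
  ultimately show ?thesis unfolding jacc_def by (auto simp: o_def)
qed

lemma jacc_prop:
  assumes "(a,b) \<in> jacc x z" "isCont h a" "\<And>n. \<bar>apply_bcontfun z n - h (apply_bcontfun x n)\<bar> \<le> e"
  shows "\<bar>b - h a\<bar> \<le> e"
proof -
  obtain r where r: "strict_mono r"
    "(\<lambda>n. (apply_bcontfun x (r n), apply_bcontfun z (r n))) \<longlonglongrightarrow> (a,b)"
    using assms(1) unfolding jacc_def by blast
  have xa: "(\<lambda>n. apply_bcontfun x (r n)) \<longlonglongrightarrow> a" using tendsto_fst[OF r(2)] by simp
  have zb: "(\<lambda>n. apply_bcontfun z (r n)) \<longlonglongrightarrow> b" using tendsto_snd[OF r(2)] by simp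
  have "(\<lambda>n. h (apply_bcontfun x (r n))) \<longlonglongrightarrow> h a"
    using isCont_tendsto_compose[OF assms(2) xa] .
  then have "(\<lambda>n. \<bar>apply_bcontfun z (r n) - h (apply_bcontfun x (r n))\<bar>) \<longlonglongrightarrow> \<bar>b - h a\<bar>"
    using zb by (intro tendsto_intros)
  then show ?thesis using assms(3) by (meson LIMSEQ_le_const2)
qed


lemma generic_inj:
  fixes K :: "(real \<times> real) set"
  assumes "finite K"
  shows "\<exists>c. card ((\<lambda>(a,b). a + c*b) ` K) = card K"
proof -
  let ?F = "(\<lambda>(p,q). (fst q - fst p) / (snd p - snd q)) ` (K \<times> K)"
  have "finite ?F" using assms by simp
  then obtain c where c: "c \<notin> ?F" using ex_new_if_finite[of ?F] infinite_UNIV_char_0 by blast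
  have "inj_on (\<lambda>(a,b). a + c*b) K"
  proof (rule inj_onI)
    fix p q assume pq: "p \<in> K" "q \<in> K" "(\<lambda>(a,b). a + c*b) p = (\<lambda>(a,b). a + c*b) q"
    obtain a b where p: "p = (a,b)" by (cases p)
    obtain a' b' where q: "q = (a',b')" by (cases q)
    have e: "a + c*b = a' + c*b'" using pq(3) p q by simp
    show "p = q"
    proof (cases "b = b'")
      case True then show ?thesis using e p q by simp
    next
      case False
      then have "c = (a' - a) / (b - b')" using e by (simp add: field_simps)
      then have "c \<in> ?F" using pq(1,2) p q by (auto intro!: image_eqI[where x="(p,q)"])
      then show ?thesis using c by blast
    qed
  qed
  then show ?thesis by (intro exI[of _ c]) (rule card_image)
qed

lemma comb:
  fixes K :: "(real \<times> real) set" and S :: "real set"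
  assumes fin: "finite K"
    and a12: "a1 \<in> S" "a2 \<in> S" "a1 \<noteq> a2"
    and gap: "g > 0" "\<And>a a'. a \<in> S \<Longrightarrow> a' \<in> S \<Longrightarrow> a \<noteq> a' \<Longrightarrow> g \<le> \<bar>a - a'\<bar>"
    and Mb: "\<And>a. a \<in> S \<Longrightarrow> \<bar>a\<bar> \<le> M"
    and ep: "0 < \<epsilon>" "\<epsilon> \<le> 1/4" "16*M*\<epsilon> < g"
    and Kp: "\<And>a b. (a,b) \<in> K \<Longrightarrow> a \<in> S \<and> (a = a1 \<longrightarrow> \<bar>b - 1\<bar> \<le> \<epsilon>) \<and> (a \<noteq> a1 \<longrightarrow> \<bar>b\<bar> \<le> \<epsilon>)"
    and ex1: "\<exists>b. (a1,b) \<in> K" and ex2: "\<exists>b. (a2,b) \<in> K"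
  shows "\<exists>c. card ((\<lambda>(a,b). a + c*b) ` K) = card K - 1"
proof -
  define S1 where "S1 = {b. (a1,b) \<in> K}"
  define S2 where "S2 = {b. (a2,b) \<in> K}"
  have "S1 = snd ` (K \<inter> {p. fst p = a1})" unfolding S1_def by force
  then have fS1: "finite S1" using fin by simp
  have "S2 = snd ` (K \<inter> {p. fst p = a2})" unfolding S2_def by force
  then have fS2: "finite S2" using fin by simp
  have ne1: "S1 \<noteq> {}" using ex1 unfolding S1_def by blast
  have ne2: "S2 \<noteq> {}" using ex2 unfolding S2_def by blast
  define s where "s = Max S1"
  define t where "t = Min S2"
  have sS1: "s \<in> S1" unfolding s_def using fS1 ne1 by simp
  have tS2: "t \<in> S2" unfolding t_def using fS2 ne2 by simp
  have smax: "\<And>b. b \<in> S1 \<Longrightarrow> b \<le> s" unfolding s_def using fS1 by simp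
  have tmin: "\<And>b. b \<in> S2 \<Longrightarrow> t \<le> b" unfolding t_def using fS2 by simp
  have s1: "\<bar>s - 1\<bar> \<le> \<epsilon>" using Kp[of a1 s] sS1 unfolding S1_def by auto
  have t0: "\<bar>t\<bar> \<le> \<epsilon>" using Kp[of a2 t] tS2 a12(3) unfolding S2_def by auto
  define d where "d = s - t"
  have dge: "d \<ge> 1/2" using s1 t0 ep unfolding d_def by linarith
  have dle: "\<bar>d - 1\<bar> \<le> 2*\<epsilon>" using s1 t0 unfolding d_def by linarith
  define c where "c = (a2 - a1) / d"
  have M0: "M \<ge> 0" using Mb[OF a12(1)] by linarith
  have a21: "\<bar>a2 - a1\<bar> \<le> 2*M" using Mb[OF a12(1)] Mb[OF a12(2)] by linarith
  have cd: "c * d = a2 - a1" unfolding c_def using dge by simp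
  have cne: "c \<noteq> 0" using cd a12(3) by auto
  have cb: "\<bar>c\<bar> \<le> 4*M"
  proof -
    have "\<bar>c\<bar> = \<bar>a2 - a1\<bar> / d" unfolding c_def using dge by simp
    also have "\<dots> \<le> (2*M) / (1/2)" using a21 dge M0
      by (intro frac_le) auto
    finally show ?thesis by simp
  qed
  define f where "f = (\<lambda>(a::real,b::real). a + c*b)"
  define p where "p = (a1, s)"
  define q where "q = (a2, t)"
  have pK: "p \<in> K" using sS1 unfolding p_def S1_def by simp
  have qK: "q \<in> K - {p}" using tS2 a12(3) unfolding q_def p_def S2_def by simp
  have fpq: "f p = f q" unfolding f_def p_def q_def using cd unfolding d_def by (simp add: algebra_simps)
  have helper: False if hb: "(a1,b) \<in> K - {p}" and hb': "(a',b') \<in> K" and ha': "a' \<noteq> a1"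
    and e: "a1 + c*b = a' + c*b'" for b a' b'
  proof -
    have b1: "\<bar>b - 1\<bar> \<le> \<epsilon>" using Kp[of a1 b] hb by auto
    have b0: "\<bar>b'\<bar> \<le> \<epsilon>" and a'S: "a' \<in> S" using Kp[of a' b'] hb' ha' by auto
    have e2: "a' - a1 = c * (b - b')" using e by (simp add: algebra_simps)
    show False
    proof (cases "a' = a2")
      case True
      then have "c * (b - b') = c * d" using e2 cd True by metis
      then have bd: "b - b' = d" using cne by auto
      have "b \<le> s" using smax hb unfolding S1_def by simp
      moreover have "t \<le> b'" using tmin hb' True unfolding S2_def by simp
      ultimately have "b = s" using bd unfolding d_def by linarith
      then show False using hb unfolding p_def by simp
    next
      case False
      have g1: "g \<le> \<bar>a' - a2\<bar>" using gap(2)[OF a'S a12(2) False] .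
      have "a' - a2 = c * (b - b' - d)" using e2 cd by (simp add: algebra_simps)
      then have "\<bar>a' - a2\<bar> = \<bar>c\<bar> * \<bar>b - b' - d\<bar>" by (simp add: abs_mult)
      also have "\<dots> \<le> (4*M) * (4*\<epsilon>)"
        using cb b1 b0 dle by (intro mult_mono) (auto simp: abs_if split: if_splits)
      finally show False using g1 ep(3) by linarith
    qed
  qed
  have inj: "inj_on f (K - {p})"
  proof (rule inj_onI)
    fix u v assume uv: "u \<in> K - {p}" "v \<in> K - {p}" "f u = f v"
    obtain a b where u: "u = (a,b)" by (cases u)
    obtain a' b' where v: "v = (a',b')" by (cases v)
    have e: "a + c*b = a' + c*b'" using uv(3) u v unfolding f_def by simp
    show "u = v"
    proof (cases "a = a'")
      case True
      then have "c * b = c * b'" using e by simp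
      then show ?thesis using cne True u v by simp
    next
      case ne: False
      show ?thesis
      proof (cases "a = a1")
        case True
        then show ?thesis using helper[of b a' b'] uv u v ne e by auto
      next
        case na: False
        show ?thesis
        proof (cases "a' = a1")
          case True
          then show ?thesis using helper[of b' a b] uv u v ne e by auto
        next
          case na': False
          have b0: "\<bar>b\<bar> \<le> \<epsilon>" and aS: "a \<in> S" using Kp[of a b] uv(1) u na by auto
          have b0': "\<bar>b'\<bar> \<le> \<epsilon>" and aS': "a' \<in> S" using Kp[of a' b'] uv(2) v na' by auto
          have g1: "g \<le> \<bar>a - a'\<bar>" using gap(2)[OF aS aS' ne] .
          have "a - a' = c * (b' - b)" using e by (simp add: algebra_simps)
          then have "\<bar>a - a'\<bar> = \<bar>c\<bar> * \<bar>b' - b\<bar>" by (simp add: abs_mult)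
          also have "\<dots> \<le> (4*M) * (2*\<epsilon>)"
            using cb b0 b0' by (intro mult_mono) (auto simp: abs_if split: if_splits)
          finally show ?thesis using g1 ep M0 by linarith
        qed
      qed
    qed
  qed
  have "f ` K = f ` (K - {p})"
  proof
    show "f ` K \<subseteq> f ` (K - {p})"
    proof
      fix y assume "y \<in> f ` K"
      then obtain u where u: "u \<in> K" "y = f u" by blast
      show "y \<in> f ` (K - {p})"
      proof (cases "u = p")
        case True then show ?thesis using u fpq qK by auto
      next
        case False then show ?thesis using u by auto
      qed
    qed
  qed auto
  then have "card (f ` K) = card (K - {p})" using card_image[OF inj] by simp
  also have "\<dots> = card K - 1" using pK fin by simp
  finally show ?thesis unfolding f_def by blast
qed


lemma many_acc:
  fixes x :: linf
  assumes m: "m > 0" and cl: "\<And>n. \<bar>apply_bcontfun x n - real (n mod m)\<bar> < 1/3"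
    and fin: "finite (acc_points x)"
  shows "m \<le> card (acc_points x)"
proof -
  have ex: "\<exists>t. t \<in> acc_points x \<and> \<bar>t - real j\<bar> \<le> 1/3" if j: "j < m" for j
  proof -
    define r where "r = (\<lambda>k::nat. j + m*k)"
    have r: "strict_mono r" unfolding r_def using m by (intro strict_monoI) auto
    obtain s t where s: "strict_mono s" "(\<lambda>k. apply_bcontfun x (r (s k))) \<longlonglongrightarrow> t"
      using bw[of "\<lambda>k. apply_bcontfun x (r k)" "norm x"] norm_bounded[of x] by blast
    have "strict_mono (r \<circ> s)" using r s(1) by (rule strict_mono_o)
    then have tin: "t \<in> acc_points x" unfolding acc_points_def using s(2) by (auto simp: o_def)
    have "(\<lambda>k. \<bar>apply_bcontfun x (r (s k)) - real j\<bar>) \<longlonglongrightarrow> \<bar>t - real j\<bar>"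
      using s(2) by (intro tendsto_intros)
    moreover have "\<forall>k. \<bar>apply_bcontfun x (r (s k)) - real j\<bar> \<le> 1/3"
    proof
      fix k
      have "r (s k) mod m = j" unfolding r_def using j by simp
      then show "\<bar>apply_bcontfun x (r (s k)) - real j\<bar> \<le> 1/3" using cl[of "r (s k)"] by simp
    qed
    ultimately have "\<bar>t - real j\<bar> \<le> 1/3" by (meson LIMSEQ_le_const2)
    then show ?thesis using tin by blast
  qed
  then obtain c where c: "\<And>j. j < m \<Longrightarrow> c j \<in> acc_points x \<and> \<bar>c j - real j\<bar> \<le> 1/3"
    by metis
  have "inj_on c {..<m}"
  proof (rule inj_onI)
    fix i j assume ij: "i \<in> {..<m}" "j \<in> {..<m}" "c i = c j"
    have "\<bar>c i - real i\<bar> \<le> 1/3" "\<bar>c j - real j\<bar> \<le> 1/3" using c[of i] c[of j] ij by auto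
    then have "\<bar>real i - real j\<bar> \<le> 2/3" using ij(3) unfolding abs_le_iff by linarith
    then show "i = j" by linarith
  qed
  moreover have "c ` {..<m} \<subseteq> acc_points x" using c by auto
  ultimately have "card {..<m} \<le> card (acc_points x)" using fin by (intro card_inj_on_le)
  then show ?thesis by simp
qed


lemma key:
  fixes V :: "linf set"
  assumes sub: "subspace V" and VY: "V \<subseteq> Lset A \<union> {0}" and dense: "closure V = UNIV"
  shows "\<exists>m\<ge>N. m \<in> A \<and> Suc m \<in> A"
proof -
  have finV: "finite (acc_points v)" if "v \<in> V" for v
  proof (cases "v = 0")
    case True then show ?thesis by (simp add: acc_zero)
  next
    case False then show ?thesis using VY that unfolding Lset_def by auto
  qed
  have cardV: "card (acc_points v) \<in> A" if "v \<in> V" "card (acc_points v) \<noteq> 1" for v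
  proof -
    have "v \<noteq> 0" using that(2) by (auto simp: acc_zero)
    then show ?thesis using VY that(1) unfolding Lset_def by auto
  qed
  define m0 where "m0 = N + 3"
  obtain x where xV: "x \<in> V" and xw: "\<forall>n. \<bar>apply_bcontfun x n - real (n mod m0)\<bar> < 1/3"
  proof -
    have "\<bar>real (n mod m0)\<bar> \<le> real m0" for n
    proof -
      have "n mod m0 < m0" unfolding m0_def by simp
      then show ?thesis by simp
    qed
    then show ?thesis using approx_in_V[OF dense, of "1/3" "\<lambda>n. real (n mod m0)" "real m0"] that by auto
  qed
  define S where "S = acc_points x"
  have finS: "finite S" unfolding S_def using finV[OF xV] .
  have cardS: "N + 3 \<le> card S" unfolding S_def m0_def
    using many_acc[of m0 x] xw finV[OF xV] unfolding m0_def by auto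
  have "S \<noteq> {}" using cardS by auto
  then obtain a1 where a1: "a1 \<in> S" by blast
  have "card (S - {a1}) \<ge> 1" using cardS a1 finS by simp
  then have "S - {a1} \<noteq> {}" by (metis card.empty not_one_le_zero)
  then obtain a2 where a2: "a2 \<in> S" "a2 \<noteq> a1" by blast
  define P where "P = {(a,a'). a \<in> S \<and> a' \<in> S \<and> a \<noteq> a'}"
  define D where "D = (\<lambda>(a,a'). \<bar>a - a'\<bar>) ` P"
  have "P \<subseteq> S \<times> S" unfolding P_def by auto
  then have "finite P" using finS by (meson finite_SigmaI finite_subset)
  then have finD: "finite D" unfolding D_def by simp
  have "(a1,a2) \<in> P" unfolding P_def using a1 a2 by auto
  then have neD: "D \<noteq> {}" unfolding D_def by blast
  define g where "g = Min D"
  have gpos: "g > 0"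
  proof -
    have "g \<in> D" unfolding g_def using finD neD by simp
    then show ?thesis unfolding D_def P_def by auto
  qed
  have gap: "g \<le> \<bar>a - a'\<bar>" if "a \<in> S" "a' \<in> S" "a \<noteq> a'" for a a'
  proof -
    have "\<bar>a - a'\<bar> \<in> D" unfolding D_def P_def using that by force
    then show ?thesis unfolding g_def using finD by simp
  qed
  define M where "M = norm x"
  have Mb: "\<bar>a\<bar> \<le> M" if "a \<in> S" for a using acc_bound[of a x] that unfolding S_def M_def by simp
  have M0: "M \<ge> 0" unfolding M_def by simp
  define h where "h = (\<lambda>t::real. max 0 (1 - \<bar>t - a1\<bar> / g))"
  have hc: "isCont h a" for a unfolding h_def using gpos by (intro continuous_intros) auto
  have hb: "\<bar>h t\<bar> \<le> 1" for t
  proof -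
    have "\<bar>t - a1\<bar> / g \<ge> 0" using gpos by simp
    then show ?thesis unfolding h_def by auto
  qed
  have h1: "h a1 = 1" unfolding h_def by simp
  have h0: "h a = 0" if "a \<in> S" "a \<noteq> a1" for a
  proof -
    have "g \<le> \<bar>a - a1\<bar>" using gap[OF that(1) a1 that(2)] .
    then have "1 \<le> \<bar>a - a1\<bar> / g" using gpos by simp
    then show ?thesis unfolding h_def by simp
  qed
  define \<epsilon> where "\<epsilon> = min (1/4) (g / (16*M+1))"
  have ep0: "\<epsilon> > 0" unfolding \<epsilon>_def using gpos M0 by simp
  have ep1: "\<epsilon> \<le> 1/4" unfolding \<epsilon>_def by (rule min.cobounded1)
  have "\<epsilon> \<le> g / (16*M+1)" unfolding \<epsilon>_def by (rule min.cobounded2)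
  then have "(16*M+1) * \<epsilon> \<le> g" using M0 by (simp add: pos_le_divide_eq mult.commute)
  then have ep2: "16*M*\<epsilon> < g" using ep0 by (simp add: algebra_simps)
  obtain z where zV: "z \<in> V" and zh: "\<forall>n. \<bar>apply_bcontfun z n - h (apply_bcontfun x n)\<bar> < \<epsilon>"
  proof -
    from approx_in_V[OF dense ep0, of "\<lambda>n. h (apply_bcontfun x n)" 1, OF hb]
    show ?thesis using that by blast
  qed
  define K where "K = jacc x z"
  have "K \<subseteq> S \<times> acc_points z" unfolding K_def S_def by (rule jacc_sub)
  then have finK: "finite K" using finS finV[OF zV] by (meson finite_SigmaI finite_subset)
  have Kp: "a \<in> S \<and> (a = a1 \<longrightarrow> \<bar>b - 1\<bar> \<le> \<epsilon>) \<and> (a \<noteq> a1 \<longrightarrow> \<bar>b\<bar> \<le> \<epsilon>)"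
    if "(a,b) \<in> K" for a b
  proof -
    have "(a,b) \<in> S \<times> acc_points z" using subsetD[OF jacc_sub that[unfolded K_def]] unfolding S_def .
    then have aS: "a \<in> S" by simp
    have "\<bar>b - h a\<bar> \<le> \<epsilon>"
      using jacc_prop[of a b x z h \<epsilon>] that hc zh unfolding K_def by (simp add: less_imp_le)
    then show ?thesis using aS h1 h0[OF aS] by auto
  qed
  have ex1: "\<exists>b. (a1,b) \<in> K" using jacc_exists[of a1 x z] a1 unfolding K_def S_def by simp
  have ex2: "\<exists>b. (a2,b) \<in> K" using jacc_exists[of a2 x z] a2(1) unfolding K_def S_def by simp
  obtain c1 where c1: "card ((\<lambda>(a,b). a + c1*b) ` K) = card K - 1"
    using comb[OF finK a1 a2(1) a2(2)[symmetric] gpos gap Mb ep0 ep1 ep2 Kp ex1 ex2] by blast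
  obtain c0 where c0: "card ((\<lambda>(a,b). a + c0*b) ` K) = card K"
    using generic_inj[OF finK] by blast
  have "S \<subseteq> fst ` K"
  proof
    fix a assume "a \<in> S"
    then obtain b where "(a,b) \<in> K" using jacc_exists[of a x z] unfolding K_def S_def by blast
    then show "a \<in> fst ` K" by (rule rev_image_eqI) simp
  qed
  then have "card S \<le> card (fst ` K)" using finK by (intro card_mono) auto
  also have "\<dots> \<le> card K" using finK by (rule card_image_le)
  finally have cK: "N + 3 \<le> card K" using cardS by simp
  have inA: "card ((\<lambda>(a,b). a + c*b) ` K) \<in> A" if "card ((\<lambda>(a,b). a + c*b) ` K) \<noteq> 1" for c
  proof -
    have uV: "x + c *\<^sub>R z \<in> V" using sub xV zV by (intro subspace_add subspace_scale) auto
    have "acc_points (x + c *\<^sub>R z) = (\<lambda>(a,b). a + c*b) ` K" unfolding K_def by (rule acc_lin)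
    then show ?thesis using cardV[OF uV] that by simp
  qed
  have A1: "card K - 1 \<in> A" using inA[of c1] c1 cK by simp
  have A2: "card K \<in> A" using inA[of c0] c0 cK by simp
  show ?thesis using A1 A2 cK by (intro exI[of _ "card K - 1"]) auto
qed

theorem theorem2p7:
  "(\<forall>A :: nat set. 0 \<notin> A \<longrightarrow> 1 \<notin> A \<longrightarrow> densely_lineable (Lset A)
       \<longrightarrow> infinite (A \<inter> (\<lambda>a. a - 1) ` A))
   \<and> \<not> densely_lineable (Lset {n. \<exists>k\<ge>1. n = 2 * k + 1})
   \<and> \<not> densely_lineable (Lset {n. \<exists>k\<ge>1. n = 2 * k})"
proof -
  have P1: "infinite (A \<inter> (\<lambda>a. a - 1) ` A)" if dl: "densely_lineable (Lset A)" for A :: "nat set"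
  proof -
    obtain V where V: "subspace V" "V \<subseteq> Lset A \<union> {0}" "closure V = UNIV"
      using dl unfolding densely_lineable_def by auto
    show ?thesis unfolding infinite_nat_iff_unbounded_le
    proof
      fix N
      obtain m where m: "m \<ge> N" "m \<in> A" "Suc m \<in> A" using key[OF V, of N] by blast
      have "m = (\<lambda>a. a - 1) (Suc m)" by simp
      then have "m \<in> (\<lambda>a. a - 1) ` A" using m(3) by (rule image_eqI)
      then show "\<exists>n\<ge>N. n \<in> A \<inter> (\<lambda>a. a - 1) ` A" using m by blast
    qed
  qed
  have O: "A \<inter> (\<lambda>a. a - 1) ` A = {}" if Ad: "A = {n. \<exists>k\<ge>1. n = 2 * k + 1}" for A :: "nat set"
  proof (rule ccontr)
    assume "A \<inter> (\<lambda>a. a - 1) ` A \<noteq> {}"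
    then obtain n a where na: "n \<in> A" "a \<in> A" "n = a - 1" by blast
    from na(1) obtain k where k: "k \<ge> 1" "n = 2 * k + 1" unfolding Ad by blast
    from na(2) obtain j where j: "j \<ge> 1" "a = 2 * j + 1" unfolding Ad by blast
    have "n = 2 * j + 1 - 1" using na(3) j(2) by simp
    then show False using k j by presburger
  qed
  have E: "A \<inter> (\<lambda>a. a - 1) ` A = {}" if Ad: "A = {n. \<exists>k\<ge>1. n = 2 * k}" for A :: "nat set"
  proof (rule ccontr)
    assume "A \<inter> (\<lambda>a. a - 1) ` A \<noteq> {}"
    then obtain n a where na: "n \<in> A" "a \<in> A" "n = a - 1" by blast
    from na(1) obtain k where k: "k \<ge> 1" "n = 2 * k" unfolding Ad by blast
    from na(2) obtain j where j: "j \<ge> 1" "a = 2 * j" unfolding Ad by blast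
    have "n = 2 * j - 1" using na(3) j(2) by simp
    then show False using k j by presburger
  qed
  have n1: "\<not> densely_lineable (Lset {n. \<exists>k\<ge>1. n = 2 * k + 1})"
  proof
    assume "densely_lineable (Lset {n. \<exists>k\<ge>1. n = 2 * k + 1})"
    from P1[OF this] show False unfolding O[OF refl] by simp
  qed
  have n2: "\<not> densely_lineable (Lset {n. \<exists>k\<ge>1. n = 2 * k})"
  proof
    assume "densely_lineable (Lset {n. \<exists>k\<ge>1. n = 2 * k})"
    from P1[OF this] show False unfolding E[OF refl] by simp
  qed
  show ?thesis using n1 n2 by (intro conjI allI impI P1) auto
qed

end
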